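(* Let $\beta>1$ be a real number. If every $x\in I_\beta\cap\mathbb{Q}(\beta)$ has an eventually periodic $(-\beta)$-expansion $d_{-\beta}(x)$, then $\beta$ is either a Pisot number or a Salem number.
   Context: For $\beta>1$ put $l_\beta=-\frac{\beta}{\beta+1}$, $r_\beta=\frac{1}{\beta+1}$ and $I_\beta=[l_\beta,r_\beta)$. Define $T:I_\beta\to I_\beta$ by $T(x)=-\beta x-\lfloor -\beta x-l_\beta\rfloor$. The $(-\beta)$-expansion of $x\in I_\beta$ is the infinite word $d_{-\beta}(x)=x_1x_2x_3\cdots$ with $x_i=\lfloor -\beta T^{i-1}(x)-l_\beta\rfloor$ for $i\ge1$; then $x=\sum_{i\ge1}x_i(-\beta)^{-i}$. $\mathbb{Q}(\beta)$ denotes the smallest subfield of $\mathbb{C}$ containing $\beta$. A Pisot number is an algebraic integer $\beta>1$ all of whose other conjugates have modulus $<1$; a Salem number is an algebraic integer $\beta>1$ all of whose other conjugates have modulus $\le1$ and which is not a Pisot number. *)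

theory Defs
  imports Complex_Main "HOL-Computational_Algebra.Polynomial_Factorial"
begin

definition lbeta :: "real \<Rightarrow> real" where
  "lbeta \<beta> = - \<beta> / (\<beta> + 1)"

definition rbeta :: "real \<Rightarrow> real" where
  "rbeta \<beta> = 1 / (\<beta> + 1)"

definition Ibeta :: "real \<Rightarrow> real set" where
  "Ibeta \<beta> = {lbeta \<beta> ..< rbeta \<beta>}"

definition negbeta_T :: "real \<Rightarrow> real \<Rightarrow> real" where
  "negbeta_T \<beta> x = - \<beta> * x - of_int \<lfloor>- \<beta> * x - lbeta \<beta>\<rfloor>"

text \<open>Digit sequence: negbeta_digits beta x i is the digit x_(i+1) of the
  (-beta)-expansion, i.e. floor(-beta T^i(x) - l_beta).\<close>
definition negbeta_digits :: "real \<Rightarrow> real \<Rightarrow> nat \<Rightarrow> int" where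
  "negbeta_digits \<beta> x i = \<lfloor>- \<beta> * ((negbeta_T \<beta> ^^ i) x) - lbeta \<beta>\<rfloor>"

definition eventually_periodic :: "(nat \<Rightarrow> 'a) \<Rightarrow> bool" where
  "eventually_periodic d \<longleftrightarrow> (\<exists>n p. p > 0 \<and> (\<forall>i\<ge>n. d (i + p) = d i))"

definition is_subfield :: "complex set \<Rightarrow> bool" where
  "is_subfield S \<longleftrightarrow> 0 \<in> S \<and> 1 \<in> S \<and> (\<forall>x\<in>S. \<forall>y\<in>S. x + y \<in> S \<and> x * y \<in> S)
     \<and> (\<forall>x\<in>S. - x \<in> S) \<and> (\<forall>x\<in>S. x \<noteq> 0 \<longrightarrow> inverse x \<in> S)"

definition field_gen :: "complex \<Rightarrow> complex set" where
  "field_gen b = \<Inter>{S. is_subfield S \<and> b \<in> S}"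

definition algebraic_integer :: "complex \<Rightarrow> bool" where
  "algebraic_integer z \<longleftrightarrow> (\<exists>p :: int poly. lead_coeff p = 1 \<and> poly (map_poly of_int p) z = 0)"

definition is_min_poly :: "complex \<Rightarrow> rat poly \<Rightarrow> bool" where
  "is_min_poly z p \<longleftrightarrow> lead_coeff p = 1 \<and> irreducible p \<and> poly (map_poly of_rat p) z = 0"

definition conjugates :: "complex \<Rightarrow> complex set" where
  "conjugates z = {w. \<exists>p. is_min_poly z p \<and> poly (map_poly of_rat p) w = 0}"

definition pisot :: "real \<Rightarrow> bool" where
  "pisot b \<longleftrightarrow> b > 1 \<and> algebraic_integer (of_real b) \<and>
     (\<forall>w\<in>conjugates (of_real b) - {of_real b}. cmod w < 1)"

definition salem :: "real \<Rightarrow> bool" where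
  "salem b \<longleftrightarrow> b > 1 \<and> algebraic_integer (of_real b) \<and>
     (\<forall>w\<in>conjugates (of_real b) - {of_real b}. cmod w \<le> 1) \<and> \<not> pisot b"

end

theory Submission
  imports Defs "HOL-Computational_Algebra.Field_as_Ring"
begin

fun PP :: "int \<Rightarrow> int \<Rightarrow> (nat \<Rightarrow> int) \<Rightarrow> nat \<Rightarrow> 'a::comm_ring_1 poly" where
  "PP a b d 0 = [:of_int a, of_int b:]"
| "PP a b d (Suc m) = - pCons 0 (PP a b d m) - [:of_int (d m):]"

lemma coeff_PP: "coeff (PP a b d m :: 'a::comm_ring_1 poly) k = of_int (coeff (PP a b d m :: int poly) k)"
proof (induction m arbitrary: k)
  case 0
  then show ?case by (cases k) (auto simp: coeff_pCons split: nat.splits)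
next
  case (Suc m)
  then show ?case by (cases k) (auto simp: coeff_pCons)
qed

lemma coeff_PP_Suc: "coeff (PP a b d (Suc m) :: 'a::comm_ring_1 poly) (Suc k) = - coeff (PP a b d m) k"
  by simp

lemma poly_PP_Suc: "poly (PP a b d (Suc m) :: 'a::comm_ring_1 poly) z = - z * poly (PP a b d m) z - of_int (d m)"
  by simp

lemma poly_PP_0: "poly (PP a b d 0 :: 'a::comm_ring_1 poly) z = of_int a + of_int b * z"
  by simp

lemma poly_PP_of_real: "poly (PP a b d m :: complex poly) (of_real r) = of_real (poly (PP a b d m) r)"
  by (induction m) auto

lemma map_of_rat_diff_PP:
  "map_poly of_rat (PP a b d m1 - PP a b d m2 :: rat poly) = (PP a b d m1 - PP a b d m2 :: complex poly)"
  by (intro poly_eqI) (simp add: coeff_map_poly coeff_PP[where 'a=rat] coeff_PP[where 'a=complex] of_rat_diff)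

lemma map_of_int_smult_diff_PP:
  "map_poly of_int (smult c (PP a b d m1 - PP a b d m2 :: int poly)) = (smult (of_int c) (PP a b d m1 - PP a b d m2) :: complex poly)"
  by (intro poly_eqI) (simp add: coeff_map_poly, metis coeff_PP)

lemma coeff_PP_top:
  "coeff (PP a 1 d m :: int poly) (m+1) = (-1)^m \<and> (\<forall>k>m+1. coeff (PP a 1 d m :: int poly) k = 0)"
proof (induction m)
  case 0
  then show ?case by (auto simp: coeff_pCons split: nat.splits)
next
  case (Suc m)
  show ?case
  proof (intro conjI allI impI)
    show "coeff (PP a 1 d (Suc m) :: int poly) (Suc m + 1) = (-1)^Suc m"
      using Suc by (simp only: add_Suc coeff_PP_Suc) simp
    fix k assume "k > Suc m + 1"
    then obtain k' where "k = Suc k'" "k' > m + 1" by (cases k) auto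
    then show "coeff (PP a 1 d (Suc m) :: int poly) k = 0"
      using Suc by (simp add: \<open>k = Suc k'\<close>)
  qed
qed

lemma map_of_rat_add: "map_poly (of_rat :: rat \<Rightarrow> complex) (p + q) = map_poly of_rat p + map_poly of_rat q"
  by (intro poly_eqI) (simp add: coeff_map_poly of_rat_add)

lemma map_of_rat_mult: "map_poly (of_rat :: rat \<Rightarrow> complex) (p * q) = map_poly of_rat p * map_poly of_rat q"
proof (induction p)
  case (pCons a p)
  show ?case
    by (simp add: mult_pCons_left map_of_rat_add map_poly_smult map_poly_pCons of_rat_mult pCons.IH)
qed simp

lemma minpoly_transfer:
  fixes w :: complex
  assumes "is_min_poly z q" "poly (map_poly of_rat q) w = 0" "poly (map_poly of_rat R) z = 0"
  shows "poly (map_poly of_rat R) w = 0"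
proof (cases "q dvd R")
  case True
  then obtain s where "R = q * s" by (auto elim: dvdE)
  then show ?thesis using assms(2) by (simp add: map_of_rat_mult)
next
  case False
  have "prime_elem q" using assms(1) unfolding is_min_poly_def by (metis irreducible_imp_prime_elem_gcd)
  hence "coprime q R" using False by (rule prime_elem_imp_coprime)
  hence g: "gcd q R = 1" by simp
  obtain u v where "u * q + v * R = 1"
    using bezout_coefficients_fst_snd[of q R] g by metis
  hence "map_poly (of_rat :: rat \<Rightarrow> complex) (u * q + v * R) = 1" by simp
  hence "poly (map_poly (of_rat :: rat \<Rightarrow> complex) (u * q + v * R)) z = 1" by simp
  moreover have "poly (map_poly of_rat q) z = 0" using assms(1) unfolding is_min_poly_def by simp
  ultimately have False using assms(3) by (simp add: map_of_rat_add map_of_rat_mult)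
  then show ?thesis ..
qed

lemma lr_facts:
  assumes "(\<beta>::real) > 1"
  shows "rbeta \<beta> = lbeta \<beta> + 1" "lbeta \<beta> > -1" "rbeta \<beta> < 1" "lbeta \<beta> < 0"
  using assms by (auto simp: lbeta_def rbeta_def field_simps)

lemma T_in:
  assumes "(\<beta>::real) > 1"
  shows "negbeta_T \<beta> y \<in> Ibeta \<beta>"
proof -
  let ?u = "- \<beta> * y - lbeta \<beta>"
  have "negbeta_T \<beta> y = (?u - of_int \<lfloor>?u\<rfloor>) + lbeta \<beta>"
    unfolding negbeta_T_def by simp
  moreover have "of_int \<lfloor>?u\<rfloor> \<le> ?u" "?u < of_int \<lfloor>?u\<rfloor> + 1"
    by linarith+
  ultimately show ?thesis using lr_facts[OF assms] unfolding Ibeta_def atLeastLessThan_iff by linarith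
qed

lemma orbit_in:
  assumes "(\<beta>::real) > 1" "x \<in> Ibeta \<beta>"
  shows "(negbeta_T \<beta> ^^ m) x \<in> Ibeta \<beta>"
  using assms by (cases m) (auto simp: T_in)

lemma I_abs:
  assumes "(\<beta>::real) > 1" "y \<in> Ibeta \<beta>"
  shows "\<bar>y\<bar> \<le> 1"
  using assms lr_facts[OF assms(1)] unfolding Ibeta_def by auto

lemma orbit_step:
  "(negbeta_T \<beta> ^^ Suc m) x = - \<beta> * (negbeta_T \<beta> ^^ m) x - of_int (negbeta_digits \<beta> x m)"
  by (simp add: negbeta_T_def negbeta_digits_def)

lemma poly_orbit:
  assumes "x = of_int a + of_int b * \<beta>"
  shows "poly (PP a b (negbeta_digits \<beta> x) m :: real poly) \<beta> = (negbeta_T \<beta> ^^ m) x"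
proof (induction m)
  case 0 then show ?case using assms by simp
next
  case (Suc m)
  show ?case unfolding poly_PP_Suc orbit_step using Suc by simp
qed

lemma digit_bound:
  assumes "(\<beta>::real) > 1" "x \<in> Ibeta \<beta>"
  shows "\<bar>of_int (negbeta_digits \<beta> x m)\<bar> \<le> \<beta> + 1"
proof -
  have e: "of_int (negbeta_digits \<beta> x m) = - \<beta> * (negbeta_T \<beta> ^^ m) x - (negbeta_T \<beta> ^^ Suc m) x"
    using orbit_step[where m=m and x=x and \<beta>=\<beta>] by simp
  have "\<bar>(negbeta_T \<beta> ^^ m) x\<bar> \<le> 1" "\<bar>(negbeta_T \<beta> ^^ Suc m) x\<bar> \<le> 1"
    using I_abs[OF assms(1) orbit_in[OF assms]] by blast+
  moreover hence "\<bar>\<beta> * (negbeta_T \<beta> ^^ m) x\<bar> \<le> \<beta>" using assms(1)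
    by (simp add: abs_mult mult_left_le)
  moreover have "\<bar>- \<beta> * (negbeta_T \<beta> ^^ m) x - (negbeta_T \<beta> ^^ Suc m) x\<bar> \<le> \<bar>- \<beta> * (negbeta_T \<beta> ^^ m) x\<bar> + \<bar>(negbeta_T \<beta> ^^ Suc m) x\<bar>"
    by (rule abs_triangle_ineq4)
  moreover have "\<bar>- \<beta> * (negbeta_T \<beta> ^^ m) x\<bar> = \<bar>\<beta> * (negbeta_T \<beta> ^^ m) x\<bar>" by simp
  ultimately show ?thesis unfolding e by linarith
qed

lemma orbit_periodic:
  assumes "(\<beta>::real) > 1" "x \<in> Ibeta \<beta>" "\<forall>i\<ge>n. negbeta_digits \<beta> x (i + p) = negbeta_digits \<beta> x i"
  shows "(negbeta_T \<beta> ^^ (n+p)) x = (negbeta_T \<beta> ^^ n) x"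
proof (rule ccontr)
  define z where "z k = (negbeta_T \<beta> ^^ (n+p+k)) x - (negbeta_T \<beta> ^^ (n+k)) x" for k
  assume ne: "(negbeta_T \<beta> ^^ (n+p)) x \<noteq> (negbeta_T \<beta> ^^ n) x"
  have zk: "z k = (-\<beta>)^k * z 0" for k
  proof (induction k)
    case (Suc k)
    have "z (Suc k) = - \<beta> * z k"
      using orbit_step[where m="n+p+k" and x=x and \<beta>=\<beta>] orbit_step[where m="n+k" and x=x and \<beta>=\<beta>] assms(3)[rule_format, of "n+k"]
      unfolding z_def by (simp add: algebra_simps)
    then show ?case using Suc by simp
  qed simp
  have zb: "\<bar>z k\<bar> \<le> 2" for k
    using I_abs[OF assms(1) orbit_in[OF assms(1,2)], of "n+p+k"] I_abs[OF assms(1) orbit_in[OF assms(1,2)], of "n+k"]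
    unfolding z_def by linarith
  have z0: "\<bar>z 0\<bar> > 0" using ne unfolding z_def by simp
  obtain k where "2 / \<bar>z 0\<bar> < \<beta> ^ k" using real_arch_pow[OF assms(1)] by blast
  hence "2 < \<beta> ^ k * \<bar>z 0\<bar>" using z0 by (simp add: field_simps)
  also have "\<beta> ^ k * \<bar>z 0\<bar> = \<bar>z k\<bar>" using zk[of k] assms(1) by (simp add: abs_mult power_abs)
  finally show False using zb[of k] by simp
qed

lemma nat_in_field: "is_subfield S \<Longrightarrow> of_nat n \<in> S"
  by (induction n) (auto simp: is_subfield_def)

lemma int_in_field: assumes S: "is_subfield S" shows "of_int k \<in> S"
proof (cases k rule: int_cases)
  case (nonneg n) then show ?thesis using nat_in_field[OF S, of n] by simp
next
  case (neg n)
  show ?thesis using nat_in_field[OF S, of "Suc n"] neg S unfolding is_subfield_def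
    by (metis of_int_minus of_int_of_nat_eq)
qed

lemma comb_in_field:
  "complex_of_real (of_int a + of_int b * \<beta>) \<in> field_gen (complex_of_real \<beta>)"
  unfolding field_gen_def
proof (rule InterI)
  fix S assume "S \<in> {S. is_subfield S \<and> complex_of_real \<beta> \<in> S}"
  hence S: "is_subfield S" "complex_of_real \<beta> \<in> S" by auto
  have "of_int a + of_int b * complex_of_real \<beta> \<in> S"
    using int_in_field[OF S(1), of a] int_in_field[OF S(1), of b] S unfolding is_subfield_def by blast
  then show "complex_of_real (of_int a + of_int b * \<beta>) \<in> S" by simp
qed

lemma key:
  fixes \<beta> :: real
  assumes b1: "\<beta> > 1"
    and hyp: "\<forall>x\<in>Ibeta \<beta>. complex_of_real x \<in> field_gen (complex_of_real \<beta>) \<longrightarrow>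
           eventually_periodic (negbeta_digits \<beta> x)"
    and xdef: "x = of_int a + of_int b * \<beta>" and xI: "x \<in> Ibeta \<beta>"
  shows "\<exists>n p. p > 0 \<and> (\<forall>i\<ge>n. negbeta_digits \<beta> x (i + p) = negbeta_digits \<beta> x i) \<and>
     poly (PP a b (negbeta_digits \<beta> x) (n+p) :: complex poly) (of_real \<beta>) =
     poly (PP a b (negbeta_digits \<beta> x) n) (of_real \<beta>)"
proof -
  have "eventually_periodic (negbeta_digits \<beta> x)"
    using hyp xI comb_in_field[of a b \<beta>] xdef by blast
  then obtain n p where np: "p > 0" "\<forall>i\<ge>n. negbeta_digits \<beta> x (i + p) = negbeta_digits \<beta> x i"
    unfolding eventually_periodic_def by blast
  have "(negbeta_T \<beta> ^^ (n+p)) x = (negbeta_T \<beta> ^^ n) x"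
    by (rule orbit_periodic[OF b1 xI np(2)])
  hence "poly (PP a b (negbeta_digits \<beta> x) (n+p) :: real poly) \<beta> = poly (PP a b (negbeta_digits \<beta> x) n) \<beta>"
    using poly_orbit[OF xdef] by simp
  hence "poly (PP a b (negbeta_digits \<beta> x) (n+p) :: complex poly) (of_real \<beta>) =
     poly (PP a b (negbeta_digits \<beta> x) n) (of_real \<beta>)" by (simp add: poly_PP_of_real)
  then show ?thesis using np by blast
qed

lemma alg_int_part:
  fixes \<beta> :: real
  assumes b1: "\<beta> > 1"
    and hyp: "\<forall>x\<in>Ibeta \<beta>. complex_of_real x \<in> field_gen (complex_of_real \<beta>) \<longrightarrow>
           eventually_periodic (negbeta_digits \<beta> x)"
  shows "algebraic_integer (complex_of_real \<beta>)"
proof -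
  define a0 where "a0 = \<lceil>lbeta \<beta> - \<beta>\<rceil>"
  define x0 where "x0 = of_int a0 + of_int 1 * \<beta>"
  have c1: "lbeta \<beta> - \<beta> \<le> of_int a0" unfolding a0_def by (rule le_of_int_ceiling)
  have c2: "of_int a0 < lbeta \<beta> - \<beta> + 1" unfolding a0_def by linarith
  have x0I: "x0 \<in> Ibeta \<beta>" using c1 c2 lr_facts[OF b1] unfolding x0_def Ibeta_def by auto
  define d where "d = negbeta_digits \<beta> x0"
  obtain n p where np: "p > 0"
    "poly (PP a0 1 d (n+p) :: complex poly) (of_real \<beta>) = poly (PP a0 1 d n) (of_real \<beta>)"
    using key[OF b1 hyp x0_def x0I] unfolding d_def by blast
  define R where "R = smult ((-1)^(n+p)) (PP a0 1 d (n+p) - PP a0 1 d n :: int poly)"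
  have t1: "coeff (PP a0 1 d (n+p) :: int poly) (n+p+1) = (-1)^(n+p)" using coeff_PP_top by blast
  have t2: "coeff (PP a0 1 d n :: int poly) (n+p+1) = 0" using coeff_PP_top[of a0 d n] np(1) by auto
  have cR: "coeff R (n+p+1) = 1" unfolding R_def using t1 t2
    by (simp add: power_mult_distrib[symmetric])
  have cR2: "coeff R k = 0" if "k > n+p+1" for k
    using coeff_PP_top[of a0 d n] coeff_PP_top[of a0 d "n+p"] that unfolding R_def by auto
  have "degree R = n+p+1"
  proof (rule antisym)
    show "degree R \<le> n+p+1" using cR2 by (intro degree_le) auto
    show "n+p+1 \<le> degree R" using cR by (intro le_degree) simp
  qed
  hence lc: "lead_coeff R = 1" using cR by simp
  have "poly (map_poly of_int R) (complex_of_real \<beta>) = 0"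
    unfolding R_def map_of_int_smult_diff_PP using np(2) by simp
  then show ?thesis unfolding algebraic_integer_def using lc by blast
qed

lemma conj_part:
  fixes \<beta> :: real
  assumes b1: "\<beta> > 1"
    and hyp: "\<forall>x\<in>Ibeta \<beta>. complex_of_real x \<in> field_gen (complex_of_real \<beta>) \<longrightarrow>
           eventually_periodic (negbeta_digits \<beta> x)"
    and w: "w \<in> conjugates (complex_of_real \<beta>) - {complex_of_real \<beta>}"
  shows "cmod w \<le> 1"
proof (rule ccontr)
  assume "\<not> cmod w \<le> 1"
  hence w1: "cmod w > 1" by simp
  obtain q where q: "is_min_poly (complex_of_real \<beta>) q" "poly (map_poly of_rat q) w = 0"
    using w unfolding conjugates_def by blast
  have wb: "w \<noteq> complex_of_real \<beta>" using w by simp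
  define c where "c = cmod (w - complex_of_real \<beta>)"
  have c0: "c > 0" using wb unfolding c_def by simp
  define B where "B = \<beta> + 1"
  define K where "K = B / (cmod w - 1)"
  obtain N :: nat where N: "(K + 1) / c < of_nat N" using reals_Archimedean2 by blast
  have NK: "of_nat N * c > K + 1" using N c0 by (simp add: field_simps)
  define a where "a = \<lceil>lbeta \<beta> - of_int (int N) * \<beta>\<rceil>"
  define x where "x = of_int a + of_int (int N) * \<beta>"
  have c1: "lbeta \<beta> - of_int (int N) * \<beta> \<le> of_int a" unfolding a_def by (rule le_of_int_ceiling)
  have c2: "of_int a < lbeta \<beta> - of_int (int N) * \<beta> + 1" unfolding a_def by linarith
  have xI: "x \<in> Ibeta \<beta>" using c1 c2 lr_facts[OF b1] unfolding x_def Ibeta_def by auto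
  define d where "d = negbeta_digits \<beta> x"
  obtain n p where np: "p > 0" "\<forall>i\<ge>n. d (i + p) = d i"
    "poly (PP a (int N) d (n+p) :: complex poly) (of_real \<beta>) = poly (PP a (int N) d n) (of_real \<beta>)"
    using key[OF b1 hyp x_def xI] unfolding d_def by blast
  define s where "s m = poly (PP a (int N) d m :: complex poly) w" for m
  have "poly (map_poly of_rat (PP a (int N) d (n+p) - PP a (int N) d n :: rat poly)) (complex_of_real \<beta>) = 0"
    unfolding map_of_rat_diff_PP using np(3) by simp
  hence "poly (map_poly of_rat (PP a (int N) d (n+p) - PP a (int N) d n :: rat poly)) w = 0"
    by (rule minpoly_transfer[OF q])
  hence snp: "s (n+p) = s n" unfolding map_of_rat_diff_PP s_def by simp
  have sstep: "s (Suc m) = - w * s m - of_int (d m)" for m unfolding s_def by simp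
  have sper: "s (m + p) = s m" if "m \<ge> n" for m
    using that
  proof (induction m rule: dec_induct)
    case base then show ?case using snp by (simp add: add.commute)
  next
    case (step m)
    have "s (Suc m + p) = - w * s (m+p) - of_int (d (m+p))" using sstep[of "m+p"] by simp
    also have "\<dots> = s (Suc m)" using step np(2) sstep[of m] by simp
    finally show ?case .
  qed
  have srep: "\<exists>m'<n+p. s m = s m'" for m
  proof (induction m rule: less_induct)
    case (less m)
    show ?case
    proof (cases "m < n+p")
      case True then show ?thesis by blast
    next
      case False
      hence "m - p \<ge> n" "m - p < m" "m = (m - p) + p" using np(1) by auto
      then show ?thesis using sper[of "m-p"] less[of "m-p"] by metis
    qed
  qed
  define M where "M = Max (cmod ` s ` {..<n+p})"
  have fin: "finite (cmod ` s ` {..<n+p})" "cmod ` s ` {..<n+p} \<noteq> {}" using np(1) by auto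
  have sM: "cmod (s m) \<le> M" for m
  proof -
    obtain m' where "m' < n+p" "s m = s m'" using srep by blast
    then show ?thesis unfolding M_def using fin by (auto intro!: Max_ge)
  qed
  obtain m0 where m0: "m0 < n+p" "cmod (s m0) = M"
    using Max_in[OF fin] unfolding M_def by auto
  have dB: "cmod (of_int (d m0)) \<le> B" using digit_bound[OF b1 xI, of m0] unfolding d_def B_def
    by (metis norm_of_int)
  have "w * s m0 = - s (Suc m0) - of_int (d m0)" using sstep[of m0] by (metis add_diff_cancel_right' diff_minus_eq_add minus_add_distrib minus_diff_eq minus_mult_left)
  hence "cmod w * M = cmod (- s (Suc m0) - of_int (d m0))" using m0 by (metis norm_mult)
  also have "\<dots> \<le> cmod (s (Suc m0)) + cmod (of_int (d m0) :: complex)"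
    by (metis norm_diff_triangle_ineq norm_minus_cancel add.commute diff_conv_add_uminus norm_triangle_ineq4)
  also have "\<dots> \<le> M + B" using sM[of "Suc m0"] dB by simp
  finally have "cmod w * M \<le> M + B" .
  hence "(cmod w - 1) * M \<le> B" by (simp add: algebra_simps)
  hence MK: "M \<le> K" unfolding K_def using w1 by (simp add: field_simps)
  have s0: "s 0 = complex_of_real x + of_nat N * (w - complex_of_real \<beta>)"
    unfolding s_def x_def by (simp add: algebra_simps)
  have "\<bar>x\<bar> \<le> 1" by (rule I_abs[OF b1 xI])
  have "cmod (of_nat N * (w - complex_of_real \<beta>)) \<le> cmod (s 0) + cmod (complex_of_real x)"
    unfolding s0 by (metis add_diff_cancel_left' norm_triangle_ineq4)
  hence "of_nat N * c \<le> cmod (s 0) + \<bar>x\<bar>" unfolding c_def by (simp add: norm_mult)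
  thus False using sM[of 0] MK NK \<open>\<bar>x\<bar> \<le> 1\<close> by linarith
qed

theorem theorem3:
  fixes \<beta> :: real
  assumes "\<beta> > 1"
    and "\<forall>x\<in>Ibeta \<beta>. complex_of_real x \<in> field_gen (complex_of_real \<beta>) \<longrightarrow>
           eventually_periodic (negbeta_digits \<beta> x)"
  shows "pisot \<beta> \<or> salem \<beta>"
  using alg_int_part[OF assms] conj_part[OF assms] assms(1)
  unfolding pisot_def salem_def by auto
end
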